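(* Let $w=(w_k)_{k\ge0}$ be a weight sequence with $w_0>0$ and $\omega<\infty$. Suppose that $n\to\infty$ and $m=m(n)$ with $m/n\to\lambda>0$. Then $Y_{(j)}=\omega$ with probability tending to $1$, for every fixed $j$.
   Context: A weight sequence is a sequence $w=(w_k)_{k\ge0}$ of nonnegative reals; $\omega=\sup\{k:w_k>0\}$. Balls-in-boxes: $\mathcal B_{m,n}=\{(y_1,\dots,y_n)\in\{0,1,\dots\}^n:\sum y_i=m\}$, weight $w(y)=\prod_iw_{y_i}$, $Z(m,n)=\sum_{y\in\mathcal B_{m,n}}w(y)$; when $Z(m,n)>0$, $B_{m,n}=(Y_1,\dots,Y_n)$ is random with $P(B_{m,n}=y)=w(y)/Z(m,n)$ (only $m,n$ with $Z(m,n)>0$ are considered). $Y_{(1)}\ge Y_{(2)}\ge\dots\ge Y_{(n)}$ denote $Y_1,\dots,Y_n$ arranged in decreasing order. *)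

theory Defs
  imports Complex_Main
begin

text \<open>omega = sup of the support of the weight sequence (meaningful when it is finite).\<close>
definition omega :: "(nat \<Rightarrow> real) \<Rightarrow> nat" where
  "omega w = Sup {k. 0 < w k}"

text \<open>Balls-in-boxes configurations: (y_1,...,y_n) as a list of length n summing to m.\<close>
definition boxes :: "nat \<Rightarrow> nat \<Rightarrow> nat list set" where
  "boxes m n = {y. length y = n \<and> sum_list y = m}"

definition bweight :: "(nat \<Rightarrow> real) \<Rightarrow> nat list \<Rightarrow> real" where
  "bweight w y = prod_list (map w y)"

definition Zbb :: "(nat \<Rightarrow> real) \<Rightarrow> nat \<Rightarrow> nat \<Rightarrow> real" where
  "Zbb w m n = (\<Sum>y\<in>boxes m n. bweight w y)"

definition bb_prob :: "(nat \<Rightarrow> real) \<Rightarrow> nat \<Rightarrow> nat \<Rightarrow> nat list set \<Rightarrow> real" where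
  "bb_prob w m n A = (\<Sum>y\<in>boxes m n \<inter> A. bweight w y) / Zbb w m n"

text \<open>j-th largest entry Y_(j), for 1 <= j <= length y.\<close>
definition ord_stat :: "nat list \<Rightarrow> nat \<Rightarrow> nat" where
  "ord_stat y j = rev (sort y) ! (j - 1)"

end

theory Submission imports Defs begin


definition cnt :: "nat \<Rightarrow> nat list \<Rightarrow> nat" where
  "cnt v y = card {i. i < length y \<and> y ! i = v}"

definition pick :: "nat \<Rightarrow> nat set \<Rightarrow> nat set" where
  "pick a I = (SOME J. J \<subseteq> I \<and> card J = a)"

definition sw :: "nat \<Rightarrow> nat \<Rightarrow> nat list \<Rightarrow> nat set \<Rightarrow> nat list" where
  "sw W a y I = map (\<lambda>i. if i \<in> pick a I then W else if i \<in> I then 0 else y ! i) [0..<length y]"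

lemma finite_boxes: "finite (boxes m n)"
proof -
  have "boxes m n \<subseteq> {y. set y \<subseteq> {0..m} \<and> length y = n}"
    unfolding boxes_def using member_le_sum_list by fastforce
  moreover have "finite {y. set y \<subseteq> {0..m} \<and> length y = n}"
    by (rule finite_lists_length_eq) simp
  ultimately show ?thesis by (rule finite_subset)
qed

lemma bweight_nth: "bweight w y = (\<Prod>i<length y. w (y ! i))"
  unfolding bweight_def by (simp add: prod.list_conv_set_nth lessThan_atLeast0)

lemma sum_list_nth': "sum_list y = (\<Sum>i<length y. y ! i)"
  by (simp add: sum_list_sum_nth lessThan_atLeast0)

lemma bweight_nonneg: "(\<And>k. w k \<ge> 0) \<Longrightarrow> bweight w y \<ge> 0"
  unfolding bweight_nth by (simp add: prod_nonneg)

lemma Zbb_nonneg: "(\<And>k. w k \<ge> 0) \<Longrightarrow> Zbb w m n \<ge> 0"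
  unfolding Zbb_def by (simp add: sum_nonneg bweight_nonneg)

lemma pick:
  assumes "finite I" "a \<le> card I"
  shows "pick a I \<subseteq> I" "card (pick a I) = a"
proof -
  obtain T where "T \<subseteq> I" "card T = a" using obtain_subset_with_card_n[OF assms(2)] by blast
  hence "\<exists>J. J \<subseteq> I \<and> card J = a" by blast
  hence "pick a I \<subseteq> I \<and> card (pick a I) = a" unfolding pick_def by (rule someI_ex)
  thus "pick a I \<subseteq> I" "card (pick a I) = a" by auto
qed

lemma sw_length[simp]: "length (sw W a y I) = length y"
  by (simp add: sw_def)

lemma sw_nth: "i < length y \<Longrightarrow> sw W a y I ! i = (if i \<in> pick a I then W else if i \<in> I then 0 else y ! i)"
  by (simp add: sw_def)

context
  fixes W a :: nat and y :: "nat list" and I :: "nat set"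
  assumes I: "I \<subseteq> {i. i < length y \<and> y ! i = a}" and cI: "card I = W" and aW: "a \<le> W"
begin

lemma finI: "finite I" using I finite_subset[of I "{..<length y}"] by auto

lemma pickI: "pick a I \<subseteq> I" "card (pick a I) = a"
  using pick[OF finI] cI aW by auto

lemma finP: "finite (pick a I)" using pickI finI finite_subset by blast

lemma sw_sum: "sum_list (sw W a y I) = sum_list y"
proof -
  let ?n = "length y" and ?y' = "sw W a y I"
  have In: "I \<subseteq> {..<?n}" using I by auto
  have s1: "(\<Sum>i<?n. ?y' ! i) = (\<Sum>i\<in>{..<?n} - I. ?y' ! i) + (\<Sum>i\<in>I. ?y' ! i)"
    by (rule sum.subset_diff[OF In]) simp
  have s2: "(\<Sum>i<?n. y ! i) = (\<Sum>i\<in>{..<?n} - I. y ! i) + (\<Sum>i\<in>I. y ! i)"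
    by (rule sum.subset_diff[OF In]) simp
  have e1: "(\<Sum>i\<in>{..<?n} - I. ?y' ! i) = (\<Sum>i\<in>{..<?n} - I. y ! i)"
    using pickI by (intro sum.cong) (auto simp: sw_nth)
  have e2: "(\<Sum>i\<in>I. ?y' ! i) = (\<Sum>i\<in>I - pick a I. ?y' ! i) + (\<Sum>i\<in>pick a I. ?y' ! i)"
    by (rule sum.subset_diff[OF pickI(1) finI])
  have e3: "(\<Sum>i\<in>I - pick a I. ?y' ! i) = 0"
    using In by (intro sum.neutral) (auto simp: sw_nth)
  have e4: "(\<Sum>i\<in>pick a I. ?y' ! i) = a * W"
  proof -
    have "(\<Sum>i\<in>pick a I. ?y' ! i) = (\<Sum>i\<in>pick a I. W)"
      using In pickI by (intro sum.cong) (auto simp: sw_nth)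
    thus ?thesis using pickI by simp
  qed
  have e5: "(\<Sum>i\<in>I. y ! i) = W * a"
  proof -
    have "(\<Sum>i\<in>I. y ! i) = (\<Sum>i\<in>I. a)" using I by (intro sum.cong) auto
    thus ?thesis using cI by simp
  qed
  show ?thesis unfolding sum_list_nth' sw_length
    using s1 s2 e1 e2 e3 e4 e5 by simp
qed

lemma sw_weight:
  assumes "w 0 > 0" "w W > 0"
  shows "bweight w y = (w a ^ W / (w W ^ a * w 0 ^ (W - a))) * bweight w (sw W a y I)"
proof -
  let ?n = "length y" and ?y' = "sw W a y I"
  have In: "I \<subseteq> {..<?n}" using I by auto
  have s1: "(\<Prod>i<?n. w (?y' ! i)) = (\<Prod>i\<in>{..<?n} - I. w (?y' ! i)) * (\<Prod>i\<in>I. w (?y' ! i))"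
    by (rule prod.subset_diff[OF In]) simp
  have s2: "(\<Prod>i<?n. w (y ! i)) = (\<Prod>i\<in>{..<?n} - I. w (y ! i)) * (\<Prod>i\<in>I. w (y ! i))"
    by (rule prod.subset_diff[OF In]) simp
  have e1: "(\<Prod>i\<in>{..<?n} - I. w (?y' ! i)) = (\<Prod>i\<in>{..<?n} - I. w (y ! i))"
    using pickI by (intro prod.cong) (auto simp: sw_nth)
  have e2: "(\<Prod>i\<in>I. w (?y' ! i)) = (\<Prod>i\<in>I - pick a I. w (?y' ! i)) * (\<Prod>i\<in>pick a I. w (?y' ! i))"
    by (rule prod.subset_diff[OF pickI(1) finI])
  have e3: "(\<Prod>i\<in>I - pick a I. w (?y' ! i)) = w 0 ^ (W - a)"
  proof -
    have "(\<Prod>i\<in>I - pick a I. w (?y' ! i)) = (\<Prod>i\<in>I - pick a I. w 0)"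
      using In by (intro prod.cong) (auto simp: sw_nth)
    thus ?thesis using pickI cI finI by (simp add: card_Diff_subset finP)
  qed
  have e4: "(\<Prod>i\<in>pick a I. w (?y' ! i)) = w W ^ a"
  proof -
    have "(\<Prod>i\<in>pick a I. w (?y' ! i)) = (\<Prod>i\<in>pick a I. w W)"
      using In pickI by (intro prod.cong) (auto simp: sw_nth)
    thus ?thesis using pickI by simp
  qed
  have e5: "(\<Prod>i\<in>I. w (y ! i)) = w a ^ W"
  proof -
    have "(\<Prod>i\<in>I. w (y ! i)) = (\<Prod>i\<in>I. w a)" using I by (intro prod.cong) auto
    thus ?thesis using cI by simp
  qed
  have pos: "w W ^ a * w 0 ^ (W - a) > 0" using assms by simp
  define R where "R = (\<Prod>i\<in>{..<?n} - I. w (y ! i))"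
  have A: "bweight w ?y' = R * (w 0 ^ (W - a) * w W ^ a)"
    unfolding bweight_nth sw_length R_def using s1 e1 e2 e3 e4 by simp
  have B: "bweight w y = R * w a ^ W"
    unfolding bweight_nth R_def using s2 e5 by simp
  have "w 0 \<noteq> 0" "w W \<noteq> 0" using assms by auto
  thus ?thesis unfolding A B by (simp add: field_simps)
qed

lemma sw_cnt: "cnt W (sw W a y I) \<le> W + cnt W y"
proof -
  have "{i. i < length y \<and> sw W a y I ! i = W} \<subseteq> I \<union> {i. i < length y \<and> y ! i = W}"
    using pickI by (auto simp: sw_nth split: if_splits)
  hence "cnt W (sw W a y I) \<le> card (I \<union> {i. i < length y \<and> y ! i = W})"
    unfolding cnt_def by (intro card_mono) (auto simp: finI)
  also have "\<dots> \<le> card I + cnt W y" unfolding cnt_def by (rule card_Un_le)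
  finally show ?thesis using cI by simp
qed

lemma sw_hit: "1 \<le> a \<Longrightarrow> I \<inter> {i. i < length y \<and> sw W a y I ! i = W} \<noteq> {}"
proof -
  assume "1 \<le> a"
  hence "pick a I \<noteq> {}" using pickI by auto
  then obtain i where "i \<in> pick a I" by blast
  moreover hence "i \<in> I" "i < length y" using pickI I by auto
  ultimately show ?thesis by (auto simp: sw_nth)
qed

end

lemma sw_inj:
  assumes "finite I" "a \<le> card I" "length y = length y2" "I \<subseteq> {i. i < length y \<and> y ! i = a}"
    "I \<subseteq> {i. i < length y2 \<and> y2 ! i = a}" "sw W a y I = sw W a y2 I"
  shows "y = y2"
proof (rule nth_equalityI)
  show "length y = length y2" by fact
  fix i assume i: "i < length y"
  show "y ! i = y2 ! i"
  proof (cases "i \<in> I")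
    case True thus ?thesis using assms by auto
  next
    case False
    have "sw W a y I ! i = sw W a y2 I ! i" using assms by simp
    thus ?thesis using False i assms(3) pick[OF assms(1,2)] by (auto simp: sw_nth split: if_splits)
  qed
qed




lemma count_hit:
  assumes "S \<subseteq> {..<n}" "1 \<le> W"
  shows "card {I. I \<subseteq> {..<n} \<and> card I = W \<and> I \<inter> S \<noteq> {}} \<le> card S * n ^ (W - 1)"
proof -
  let ?J = "{J. J \<subseteq> {..<n} \<and> card J = W - 1}"
  have finS: "finite S" using assms finite_subset by blast
  have sub: "{I. I \<subseteq> {..<n} \<and> card I = W \<and> I \<inter> S \<noteq> {}} \<subseteq> (\<Union>x\<in>S. insert x ` ?J)"
  proof
    fix I assume "I \<in> {I. I \<subseteq> {..<n} \<and> card I = W \<and> I \<inter> S \<noteq> {}}"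
    hence I: "I \<subseteq> {..<n}" "card I = W" "I \<inter> S \<noteq> {}" by auto
    then obtain x where x: "x \<in> I" "x \<in> S" by blast
    have fI: "finite I" using I(1) finite_subset by blast
    have "I - {x} \<in> ?J" using I x fI by auto
    moreover have "I = insert x (I - {x})" using x by auto
    ultimately show "I \<in> (\<Union>x\<in>S. insert x ` ?J)" using x by blast
  qed
  have finJ: "finite ?J" by (rule finite_subset[of _ "Pow {..<n}"]) auto
  have "card {I. I \<subseteq> {..<n} \<and> card I = W \<and> I \<inter> S \<noteq> {}} \<le> card (\<Union>x\<in>S. insert x ` ?J)"
    by (rule card_mono[OF _ sub]) (use finS finJ in auto)
  also have "\<dots> \<le> (\<Sum>x\<in>S. card (insert x ` ?J))" by (rule card_UN_le[OF finS])
  also have "\<dots> \<le> (\<Sum>x\<in>S. n ^ (W - 1))"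
  proof (rule sum_mono)
    fix x assume "x \<in> S"
    have "card (insert x ` ?J) \<le> card ?J" by (rule card_image_le[OF finJ])
    also have "card ?J = n choose (W - 1)" using n_subsets[of "{..<n}" "W - 1"] by simp
    also have "\<dots> \<le> n ^ (W - 1)"
      by (cases "W - 1 \<le> n") (auto simp: binomial_le_pow binomial_eq_0)
    finally show "card (insert x ` ?J) \<le> n ^ (W - 1)" .
  qed
  finally show ?thesis by simp
qed

lemma switch:
  fixes w :: "nat \<Rightarrow> real"
  assumes w0: "\<And>k. w k \<ge> 0" and p0: "w 0 > 0" and pW: "w W > 0" and a: "1 \<le> a" "a < W"
  shows "(\<Sum>y\<in>{y\<in>boxes m n. cnt W y < j \<and> K \<le> cnt a y}. bweight w y) * real (K choose W)
     \<le> (w a ^ W / (w W ^ a * w 0 ^ (W - a))) * (real (j + W) * real n ^ (W - 1)) * Zbb w m n"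
proof -
  define A where "A = {y\<in>boxes m n. cnt W y < j \<and> K \<le> cnt a y}"
  define c where "c = w a ^ W / (w W ^ a * w 0 ^ (W - a))"
  define Apos where "Apos y = {i. i < length y \<and> y ! i = a}" for y
  define F where "F y = {I. I \<subseteq> Apos y \<and> card I = W}" for y
  define T where "T = Sigma A F"
  define g where "g = (\<lambda>(y, I). (sw W a y I, I))"
  define Hit where "Hit y' = {I. I \<subseteq> {..<n} \<and> card I = W \<and> I \<inter> {i. i < length y' \<and> y' ! i = W} \<noteq> {}}" for y'
  define B where "B = {y'\<in>boxes m n. cnt W y' < j + W}"
  define U where "U = Sigma B Hit"
  define bw where "bw = bweight w"
  have bw0: "bw y \<ge> 0" for y unfolding bw_def by (rule bweight_nonneg[OF w0])
  have c0: "c \<ge> 0" unfolding c_def using w0 by (simp add: divide_nonneg_pos)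
  have finA: "finite A" unfolding A_def using finite_boxes by auto
  have finApos: "finite (Apos y)" for y unfolding Apos_def by auto
  have finF: "finite (F y)" for y
    unfolding F_def by (rule finite_subset[of _ "Pow (Apos y)"]) (use finApos in auto)
  have finT: "finite T" unfolding T_def using finA finF by (intro finite_SigmaI) auto
  have finB: "finite B" unfolding B_def using finite_boxes by auto
  have finHit: "finite (Hit y)" for y
    unfolding Hit_def by (rule finite_subset[of _ "Pow {..<n}"]) auto
  have finU: "finite U" unfolding U_def using finB finHit by (intro finite_SigmaI) auto
  have lenA: "length y = n" if "y \<in> A" for y using that unfolding A_def boxes_def by auto
  have "(\<Sum>y\<in>A. bw y) * real (K choose W) = (\<Sum>y\<in>A. bw y * real (K choose W))"
    by (simp add: sum_distrib_right)
  also have "\<dots> \<le> (\<Sum>y\<in>A. bw y * real (card (F y)))"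
  proof (rule sum_mono)
    fix y assume y: "y \<in> A"
    have "card (F y) = card (Apos y) choose W" unfolding F_def by (rule n_subsets[OF finApos])
    moreover have "K \<le> card (Apos y)" using y unfolding A_def Apos_def cnt_def by auto
    ultimately have "K choose W \<le> card (F y)" by (simp add: binomial_right_mono)
    thus "bw y * real (K choose W) \<le> bw y * real (card (F y))"
      by (intro mult_left_mono) (auto simp: bw0)
  qed
  also have "\<dots> = (\<Sum>y\<in>A. \<Sum>I\<in>F y. bw y)" by (simp add: mult.commute)
  also have "\<dots> = (\<Sum>(y, I)\<in>T. bw y)" unfolding T_def by (rule sum.Sigma[OF finA]) (use finF in auto)
  also have "\<dots> = (\<Sum>(y, I)\<in>T. c * bw (sw W a y I))"
  proof (rule sum.cong[OF refl])
    fix p assume "p \<in> T"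
    then obtain y I where p: "p = (y, I)" "y \<in> A" "I \<in> F y" unfolding T_def by auto
    have "I \<subseteq> {i. i < length y \<and> y ! i = a}" "card I = W" using p unfolding F_def Apos_def by auto
    from sw_weight[OF this _ p0 pW] a show "(case p of (y, I) \<Rightarrow> bw y) = (case p of (y, I) \<Rightarrow> c * bw (sw W a y I))"
      unfolding p c_def bw_def by simp
  qed
  also have "\<dots> = c * (\<Sum>p\<in>T. bw (fst (g p)))"
    by (simp add: sum_distrib_left g_def case_prod_beta)
  also have "(\<Sum>p\<in>T. bw (fst (g p))) = (\<Sum>q\<in>g ` T. bw (fst q))"
  proof -
    have "inj_on g T"
    proof (rule inj_onI)
      fix p q assume pq: "p \<in> T" "q \<in> T" "g p = g q"
      obtain y I where p: "p = (y, I)" "y \<in> A" "I \<in> F y" using pq(1) unfolding T_def by auto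
      obtain y2 I2 where q: "q = (y2, I2)" "y2 \<in> A" "I2 \<in> F y2" using pq(2) unfolding T_def by auto
      have II: "I2 = I" and ss: "sw W a y I = sw W a y2 I" using pq(3) unfolding p q g_def by auto
      have I: "I \<subseteq> {i. i < length y \<and> y ! i = a}" "card I = W" using p unfolding F_def Apos_def by auto
      have I2: "I \<subseteq> {i. i < length y2 \<and> y2 ! i = a}" using q II unfolding F_def Apos_def by auto
      have "y = y2"
        by (rule sw_inj[OF finI[OF I] _ _ I(1) I2 ss]) (use I a lenA p q in auto)
      thus "p = q" using p q II by simp
    qed
    thus ?thesis by (simp add: sum.reindex)
  qed
  also have "(\<Sum>q\<in>g ` T. bw (fst q)) \<le> (\<Sum>q\<in>U. bw (fst q))"
  proof (rule sum_mono2[OF finU])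
    show "g ` T \<subseteq> U"
    proof
      fix q assume "q \<in> g ` T"
      then obtain y I where p: "q = g (y, I)" "y \<in> A" "I \<in> F y" unfolding T_def by auto
      have I: "I \<subseteq> {i. i < length y \<and> y ! i = a}" "card I = W" "a \<le> W"
        using p a unfolding F_def Apos_def by auto
      have "sw W a y I \<in> boxes m n" using p(2) sw_sum[OF I] unfolding A_def boxes_def by auto
      moreover have "cnt W (sw W a y I) < j + W" using sw_cnt[OF I] p(2) unfolding A_def by auto
      moreover have "I \<in> Hit (sw W a y I)" unfolding Hit_def
        using sw_hit[OF I a(1)] I lenA[OF p(2)] by auto
      ultimately show "q \<in> U" unfolding U_def B_def p g_def by auto
    qed
  qed (auto simp: bw0)
  also have "(\<Sum>q\<in>U. bw (fst q)) = (\<Sum>y'\<in>B. \<Sum>I\<in>Hit y'. bw y')"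
    unfolding U_def by (subst sum.Sigma[OF finB]) (auto simp: finHit case_prod_beta)
  also have "\<dots> = (\<Sum>y'\<in>B. bw y' * real (card (Hit y')))" by (simp add: mult.commute)
  also have "\<dots> \<le> (\<Sum>y'\<in>B. bw y' * (real (j + W) * real n ^ (W - 1)))"
  proof (rule sum_mono)
    fix y' assume y': "y' \<in> B"
    have len: "length y' = n" using y' unfolding B_def boxes_def by auto
    have "card (Hit y') \<le> cnt W y' * n ^ (W - 1)"
      unfolding Hit_def cnt_def by (rule count_hit) (use len a in auto)
    also have "\<dots> \<le> (j + W) * n ^ (W - 1)" using y' unfolding B_def by auto
    finally have "real (card (Hit y')) \<le> real (j + W) * real n ^ (W - 1)"
      by (metis of_nat_le_iff of_nat_mult of_nat_power)
    thus "bw y' * real (card (Hit y')) \<le> bw y' * (real (j + W) * real n ^ (W - 1))"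
      by (intro mult_left_mono) (auto simp: bw0)
  qed
  also have "\<dots> = (\<Sum>y'\<in>B. bw y') * (real (j + W) * real n ^ (W - 1))"
    by (simp add: sum_distrib_right)
  finally have X: "(\<Sum>y\<in>A. bw y) * real (K choose W) \<le> c * ((\<Sum>y'\<in>B. bw y') * (real (j + W) * real n ^ (W - 1)))"
    using c0 by (simp add: mult_left_mono)
  have "(\<Sum>y'\<in>B. bw y') \<le> Zbb w m n"
    unfolding Zbb_def bw_def B_def by (rule sum_mono2[OF finite_boxes]) (auto simp: bweight_nonneg w0)
  hence "c * ((\<Sum>y'\<in>B. bw y') * (real (j + W) * real n ^ (W - 1))) \<le> c * (Zbb w m n * (real (j + W) * real n ^ (W - 1)))"
    using c0 by (intro mult_left_mono mult_right_mono) auto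
  with X have "(\<Sum>y\<in>A. bw y) * real (K choose W) \<le> c * (real (j + W) * real n ^ (W - 1)) * Zbb w m n"
    by (simp add: mult_ac)
  thus ?thesis unfolding A_def c_def bw_def .
qed




lemma omega_facts:
  fixes w :: "nat \<Rightarrow> real"
  assumes "w 0 > 0" "finite {k. 0 < w k}"
  shows "w (omega w) > 0" "\<And>k. w k > 0 \<Longrightarrow> k \<le> omega w"
proof -
  have ne: "{k. 0 < w k} \<noteq> {}" using assms by auto
  have eq: "omega w = Max {k. 0 < w k}" unfolding omega_def using assms(2) ne by (rule cSup_eq_Max)
  show "w (omega w) > 0" unfolding eq using Max_in[OF assms(2) ne] by simp
  show "\<And>k. w k > 0 \<Longrightarrow> k \<le> omega w" unfolding eq using assms(2) by simp
qed

lemma sorted_top: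
  fixes s :: "nat list"
  assumes "sorted s" "\<forall>x\<in>set s. x \<le> W" "1 \<le> j" "j \<le> length (filter (\<lambda>x. x = W) s)"
  shows "s ! (length s - j) = W"
proof (rule ccontr)
  assume ne: "s ! (length s - j) \<noteq> W"
  have jl: "j \<le> length s" using assms(4) length_filter_le order_trans by blast
  hence idx: "length s - j < length s" using assms(3) by simp
  have lt: "s ! (length s - j) < W" using ne assms(2) idx by (meson nth_mem order_le_neq_trans)
  have "{i. i < length s \<and> s ! i = W} \<subseteq> {length s - j + 1..<length s}"
  proof
    fix i assume i: "i \<in> {i. i < length s \<and> s ! i = W}"
    have "\<not> i \<le> length s - j"
    proof
      assume "i \<le> length s - j"
      hence "s ! i \<le> s ! (length s - j)" using assms(1) idx by (simp add: sorted_nth_mono)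
      thus False using i lt by simp
    qed
    thus "i \<in> {length s - j + 1..<length s}" using i by auto
  qed
  hence "card {i. i < length s \<and> s ! i = W} \<le> card {length s - j + 1..<length s}"
    by (intro card_mono) auto
  also have "\<dots> = j - 1" using jl assms(3) by simp
  finally show False using assms(4) assms(3) by (simp add: length_filter_conv_card)
qed

lemma ord_stat_top:
  assumes "\<forall>x\<in>set y. x \<le> W" "1 \<le> j" "j \<le> cnt W y"
  shows "ord_stat y j = W"
proof -
  let ?s = "sort y"
  have f: "filter (\<lambda>x. x = W) ?s = filter (\<lambda>x. x = W) y"
    using sort_key_stable[of "\<lambda>x. x" W y] by simp
  have c: "j \<le> length (filter (\<lambda>x. x = W) ?s)"
    unfolding f using assms(3) by (simp add: cnt_def length_filter_conv_card)
  have jl: "j \<le> length ?s" using c length_filter_le order_trans by blast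
  have "?s ! (length ?s - j) = W"
    by (rule sorted_top) (use assms c in auto)
  moreover have "rev ?s ! (j - 1) = ?s ! (length ?s - j)"
    using jl assms(2) by (simp add: rev_nth Suc_diff_le)
  ultimately show ?thesis unfolding ord_stat_def by simp
qed

lemma cover:
  fixes w :: "nat \<Rightarrow> real"
  assumes y: "y \<in> boxes m n" and pos: "bweight w y > 0" and wle: "\<And>k. w k > 0 \<Longrightarrow> k \<le> W"
    and cW: "cnt W y < j" and big: "W * j + W * W * K < m" and w0: "\<And>k. w k \<ge> 0"
  shows "\<exists>a\<in>{1..<W}. K \<le> cnt a y"
proof (rule ccontr)
  assume "\<not> ?thesis"
  hence small: "cnt a y < K" if "a \<in> {1..<W}" for a using that by force
  have len: "length y = n" and sm: "sum_list y = m" using y unfolding boxes_def by auto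
  have le: "y ! i \<le> W" if "i < n" for i
  proof -
    have "w (y ! i) \<noteq> 0"
    proof
      assume "w (y ! i) = 0"
      hence "bweight w y = 0" unfolding bweight_nth using that len by (intro prod_zero) auto
      thus False using pos by simp
    qed
    thus ?thesis using wle w0[of "y ! i"] by force
  qed
  define P where "P = {i. i < n \<and> y ! i = W}"
  define Q where "Q = {i. i < n \<and> y ! i \<in> {1..<W}}"
  have "m = (\<Sum>i<n. y ! i)" using sm len by (simp add: sum_list_nth')
  also have "\<dots> \<le> (\<Sum>i<n. (if i \<in> P then W else 0) + (if i \<in> Q then W else 0))"
  proof (rule sum_mono)
    fix i assume "i \<in> {..<n}"
    hence "y ! i \<le> W" "i < n" using le by auto
    thus "y ! i \<le> (if i \<in> P then W else 0) + (if i \<in> Q then W else 0)"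
      unfolding P_def Q_def by (cases "y ! i = 0"; cases "y ! i = W") auto
  qed
  also have "\<dots> = W * card P + W * card Q"
    unfolding sum.distrib P_def Q_def by (simp add: sum.If_cases Int_def conj_commute)
  finally have mle: "m \<le> W * card P + W * card Q" .
  have cP: "card P < j" using cW len unfolding P_def cnt_def by simp
  have cQ: "card Q \<le> W * K"
  proof -
    have "Q = (\<Union>a\<in>{1..<W}. {i. i < length y \<and> y ! i = a})" unfolding Q_def using len by auto
    hence "card Q \<le> (\<Sum>a\<in>{1..<W}. cnt a y)" unfolding cnt_def by (simp add: card_UN_le)
    also have "\<dots> \<le> (\<Sum>a\<in>{1..<W}. K)" using small by (intro sum_mono) (simp add: less_imp_le)
    also have "\<dots> \<le> W * K" by simp
    finally show ?thesis .
  qed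
  have "W * card P \<le> W * j" using cP by simp
  moreover have "W * card Q \<le> W * (W * K)" using cQ by simp
  ultimately show False using mle big by linarith
qed




lemma asym:
  fixes kap x :: real and K W :: nat
  assumes "0 < kap" "0 < x" "1 \<le> W" "kap * x \<le> real K" "W \<le> K"
  shows "x ^ (W - 1) / real (K choose W) \<le> (real W / kap) ^ W / x"
proof -
  have "(real K / real W) ^ W \<le> real (K choose W)" using binomial_ge_n_over_k_pow_k[OF assms(5)] by simp
  moreover have "(kap * x / real W) ^ W \<le> (real K / real W) ^ W"
    using assms by (intro power_mono divide_right_mono) auto
  moreover have pos: "0 < (kap * x / real W) ^ W" using assms by simp
  ultimately have C: "(kap * x / real W) ^ W \<le> real (K choose W)" by linarith
  have "x ^ (W - 1) / real (K choose W) \<le> x ^ (W - 1) / (kap * x / real W) ^ W"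
    using C pos assms by (intro divide_left_mono) auto
  also have "\<dots> = (real W / kap) ^ W / x"
  proof -
    obtain V where V: "W = Suc V" using assms(3) by (cases W) auto
    show ?thesis using assms unfolding V by (simp add: field_simps power_mult_distrib)
  qed
  finally show ?thesis .
qed

lemma bound_n:
  fixes w :: "nat \<Rightarrow> real"
  assumes w0: "\<And>k. w k \<ge> 0" and p0: "w 0 > 0" and fin: "finite {k. 0 < w k}"
    and Z: "Zbb w m n > 0" and j: "1 \<le> j" and big: "omega w * j + omega w * omega w * K < m"
    and WK: "omega w \<le> K"
  shows "1 - bb_prob w m n {y. ord_stat y j = omega w}
     \<le> (\<Sum>a\<in>{1..<omega w}. w a ^ omega w / (w (omega w) ^ a * w 0 ^ (omega w - a)) * real (j + omega w))
        * real n ^ (omega w - 1) / real (K choose omega w)"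
proof -
  define W where "W = omega w"
  note om = omega_facts[OF p0 fin, folded W_def]
  define E where "E = {y. ord_stat y j = W}"
  define A where "A a = {y\<in>boxes m n. cnt W y < j \<and> K \<le> cnt a y}" for a
  define c where "c a = w a ^ W / (w W ^ a * w 0 ^ (W - a))" for a
  define bw where "bw = bweight w"
  have bw0: "bw y \<ge> 0" for y unfolding bw_def by (rule bweight_nonneg[OF w0])
  have Cpos: "real (K choose W) > 0" using WK unfolding W_def by simp
  have finbx: "finite (boxes m n)" by (rule finite_boxes)
  have split: "Zbb w m n = (\<Sum>y\<in>boxes m n - E. bw y) + (\<Sum>y\<in>boxes m n \<inter> E. bw y)"
  proof -
    have "Zbb w m n = (\<Sum>y\<in>boxes m n - boxes m n \<inter> E. bw y) + (\<Sum>y\<in>boxes m n \<inter> E. bw y)"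
      unfolding Zbb_def bw_def by (rule sum.subset_diff) (use finbx in auto)
    moreover have "boxes m n - boxes m n \<inter> E = boxes m n - E" by auto
    ultimately show ?thesis by simp
  qed
  have p: "1 - bb_prob w m n E = (\<Sum>y\<in>boxes m n - E. bw y) / Zbb w m n"
    unfolding bb_prob_def bw_def using Z split unfolding bw_def by (simp add: field_simps)
  have "(\<Sum>y\<in>boxes m n - E. bw y) \<le> (\<Sum>y\<in>boxes m n - E. \<Sum>a\<in>{1..<W}. if y \<in> A a then bw y else 0)"
  proof (rule sum_mono)
    fix y assume y: "y \<in> boxes m n - E"
    show "bw y \<le> (\<Sum>a\<in>{1..<W}. if y \<in> A a then bw y else 0)"
    proof (cases "bw y > 0")
      case False thus ?thesis using bw0[of y] by (simp add: sum_nonneg)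
    next
      case True
      have le: "x \<le> W" if xy: "x \<in> set y" for x
      proof -
        obtain i where i: "i < length y" "y ! i = x" using xy in_set_conv_nth[of x y] by blast
        have "w x \<noteq> 0"
        proof
          assume "w x = 0"
          hence "bweight w y = 0" unfolding bweight_nth using i by (intro prod_zero) auto
          thus False using True bw_def by simp
        qed
        thus ?thesis using om(2) w0[of x] by force
      qed
      have cW: "cnt W y < j"
      proof (rule ccontr)
        assume "\<not> cnt W y < j"
        hence "ord_stat y j = W" using le j by (intro ord_stat_top) auto
        thus False using y unfolding E_def by simp
      qed
      obtain a where a: "a \<in> {1..<W}" "K \<le> cnt a y"
        using cover[of y m n w W j K] y True om(2) cW big w0 unfolding bw_def W_def by auto
      have "y \<in> A a" using a y cW unfolding A_def by auto
      hence "bw y = (if y \<in> A a then bw y else 0)" by simp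
      also have "\<dots> \<le> (\<Sum>a\<in>{1..<W}. if y \<in> A a then bw y else 0)"
        by (rule member_le_sum) (use a bw0 in auto)
      finally show ?thesis .
    qed
  qed
  also have "\<dots> = (\<Sum>a\<in>{1..<W}. \<Sum>y\<in>boxes m n - E. if y \<in> A a then bw y else 0)"
    by (rule sum.swap)
  also have "\<dots> \<le> (\<Sum>a\<in>{1..<W}. \<Sum>y\<in>A a. bw y)"
  proof (rule sum_mono)
    fix a
    have "(\<Sum>y\<in>boxes m n - E. if y \<in> A a then bw y else 0) = (\<Sum>y\<in>(boxes m n - E) \<inter> A a. bw y)"
      by (rule sum.inter_restrict[symmetric]) (use finbx in auto)
    also have "\<dots> \<le> (\<Sum>y\<in>A a. bw y)"
      by (rule sum_mono2) (auto simp: A_def finbx bw0)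
    finally show "(\<Sum>y\<in>boxes m n - E. if y \<in> A a then bw y else 0) \<le> (\<Sum>y\<in>A a. bw y)" .
  qed
  also have "\<dots> \<le> (\<Sum>a\<in>{1..<W}. c a * (real (j + W) * real n ^ (W - 1)) * Zbb w m n / real (K choose W))"
  proof (rule sum_mono)
    fix a assume a: "a \<in> {1..<W}"
    have "(\<Sum>y\<in>A a. bw y) * real (K choose W) \<le> c a * (real (j + W) * real n ^ (W - 1)) * Zbb w m n"
      unfolding A_def bw_def c_def by (rule switch[OF w0 p0 om(1)]) (use a in auto)
    thus "(\<Sum>y\<in>A a. bw y) \<le> c a * (real (j + W) * real n ^ (W - 1)) * Zbb w m n / real (K choose W)"
      using Cpos by (simp add: field_simps)
  qed
  also have "\<dots> = (\<Sum>a\<in>{1..<W}. c a * real (j + W) * (real n ^ (W - 1) * Zbb w m n / real (K choose W)))"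
    by (intro sum.cong) (auto simp: divide_inverse mult_ac)
  also have "\<dots> = (\<Sum>a\<in>{1..<W}. c a * real (j + W)) * (real n ^ (W - 1) * Zbb w m n / real (K choose W))"
    by (simp only: sum_distrib_right)
  finally have X: "(\<Sum>y\<in>boxes m n - E. bw y) \<le> (\<Sum>a\<in>{1..<W}. c a * real (j + W)) * (real n ^ (W - 1) * Zbb w m n / real (K choose W))" .
  have "(\<Sum>y\<in>boxes m n - E. bw y) / Zbb w m n \<le> (\<Sum>a\<in>{1..<W}. c a * real (j + W)) * (real n ^ (W - 1) * Zbb w m n / real (K choose W)) / Zbb w m n"
    using Z X by (intro divide_right_mono) auto
  also have "\<dots> = (\<Sum>a\<in>{1..<W}. c a * real (j + W)) * real n ^ (W - 1) / real (K choose W)"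
    using Z Cpos by (simp add: field_simps)
  finally have "(\<Sum>y\<in>boxes m n - E. bw y) / Zbb w m n \<le> (\<Sum>a\<in>{1..<W}. c a * real (j + W)) * real n ^ (W - 1) / real (K choose W)" .
  hence "1 - bb_prob w m n E \<le> (\<Sum>a\<in>{1..<W}. c a * real (j + W)) * real n ^ (W - 1) / real (K choose W)"
    using p by simp
  thus ?thesis unfolding E_def c_def W_def .
qed




theorem theorem18p1:
  fixes w :: "nat \<Rightarrow> real" and m :: "nat \<Rightarrow> nat" and lam :: real and j :: nat
  assumes "\<And>k. w k \<ge> 0" and "w 0 > 0" and "finite {k. 0 < w k}"
    and "lam > 0" and "(\<lambda>n. real (m n) / real n) \<longlonglongrightarrow> lam"
    and "j \<ge> 1"
  shows "((\<lambda>n. bb_prob w (m n) n {y. ord_stat y j = omega w}) \<longlongrightarrow> 1)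
           (inf sequentially (principal {n. Zbb w (m n) n > 0}))"
proof -
  note w0 = assms(1) and p0 = assms(2) and fin = assms(3) and lam = assms(4) and j = assms(6)
  define W where "W = omega w"
  note om = omega_facts[OF p0 fin, folded W_def]
  define d where "d = 2 * W * W + 1"
  define K where "K n = m n div d" for n
  define kap where "kap = lam / (4 * real d)"
  define c where "c a = w a ^ W / (w W ^ a * w 0 ^ (W - a))" for a
  define S where "S = (\<Sum>a\<in>{1..<W}. c a * real (j + W))"
  define D where "D = S * (real W / kap) ^ W"
  define f where "f n = bb_prob w (m n) n {y. ord_stat y j = omega w}" for n
  define F where "F = inf sequentially (principal {n. Zbb w (m n) n > 0})"
  have dpos: "d > 0" unfolding d_def by simp
  have kpos: "kap > 0" unfolding kap_def using lam dpos by simp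
  have S0: "S \<ge> 0" unfolding S_def c_def using w0 by (intro sum_nonneg mult_nonneg_nonneg divide_nonneg_nonneg) auto
  define X where "X = 1 + 1 / kap + 4 * real W * real j / lam + real W / kap"
  have e1: "eventually (\<lambda>n. real (m n) / real n > lam / 2) sequentially"
    using order_tendstoD(1)[OF assms(5), of "lam / 2"] lam by linarith
  obtain N where N: "X \<le> real N" using real_arch_simple by blast
  have e2: "eventually (\<lambda>n. real n \<ge> X) sequentially"
    unfolding eventually_at_top_linorder using N by (intro exI[of _ N]) auto
  have good: "eventually (\<lambda>n. 0 < n \<and> W * j + W * W * K n < m n \<and> kap * real n \<le> real (K n) \<and> W \<le> K n) sequentially"
    using e1 e2
  proof eventually_elim
    case (elim n)
    have X1: "real n \<ge> 1" "real n \<ge> 1 / kap" "real n \<ge> 4 * real W * real j / lam" "real n \<ge> real W / kap"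
    proof -
      have "1 / kap \<ge> 0" "4 * real W * real j / lam \<ge> 0" "real W / kap \<ge> 0" using kpos lam by auto
      thus "real n \<ge> 1" "real n \<ge> 1 / kap" "real n \<ge> 4 * real W * real j / lam" "real n \<ge> real W / kap"
        using elim(2) unfolding X_def by linarith+
    qed
    hence npos: "0 < n" by simp
    have mn: "real (m n) > lam / 2 * real n" using elim(1) npos by (simp add: field_simps)
    have "real (2 * W * j) = lam / 2 * (4 * real W * real j / lam)" using lam by simp
    also have "\<dots> \<le> lam / 2 * real n" using X1(3) lam by (intro mult_left_mono) auto
    finally have "real (2 * W * j) < real (m n)" using mn by linarith
    hence c1: "2 * W * j < m n" by linarith
    have "K n * d \<le> m n" unfolding K_def by simp
    hence "2 * W * W * K n \<le> m n" unfolding d_def by (simp add: algebra_simps)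
    hence big: "W * j + W * W * K n < m n" using c1 by linarith
    have "m n = K n * d + m n mod d" unfolding K_def by simp
    moreover have "m n mod d < d" using dpos by simp
    ultimately have "m n < K n * d + d" by linarith
    hence "m n < (K n + 1) * d" by (simp add: distrib_right)
    hence "real (m n) < (real (K n) + 1) * real d" by (metis of_nat_1 of_nat_add of_nat_less_iff of_nat_mult)
    hence "real (m n) / real d < real (K n) + 1" using dpos by (simp add: divide_less_eq)
    moreover have "real (m n) / real d > lam / 2 * real n / real d" using mn dpos by (intro divide_strict_right_mono) auto
    moreover have "lam / 2 * real n / real d = 2 * kap * real n" unfolding kap_def by (simp add: field_simps)
    moreover have "kap * real n \<ge> 1" using X1(2) kpos by (simp add: field_simps)
    ultimately have Kb: "kap * real n \<le> real (K n)" by linarith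
    have "real W \<le> kap * real n" using X1(4) kpos by (simp add: field_simps)
    hence "W \<le> K n" using Kb by linarith
    thus ?case using npos big Kb by simp
  qed
  have ev: "eventually (\<lambda>n. 1 - D / real n \<le> f n \<and> f n \<le> 1) F"
    unfolding F_def eventually_inf_principal using good
  proof eventually_elim
    case (elim n)
    show ?case
    proof
      assume Z: "n \<in> {n. 0 < Zbb w (m n) n}"
      hence Z: "Zbb w (m n) n > 0" by simp
      have b: "1 - f n \<le> S * real n ^ (W - 1) / real (K n choose W)"
        unfolding f_def S_def c_def W_def
        by (rule bound_n[OF w0 p0 fin Z j]) (use elim in \<open>auto simp: W_def\<close>)
      have "S * real n ^ (W - 1) / real (K n choose W) \<le> D / real n"
      proof (cases "W = 0")
        case True thus ?thesis unfolding S_def D_def by simp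
      next
        case False
        have "real n ^ (W - 1) / real (K n choose W) \<le> (real W / kap) ^ W / real n"
          by (rule asym) (use elim kpos False in auto)
        hence "S * (real n ^ (W - 1) / real (K n choose W)) \<le> S * ((real W / kap) ^ W / real n)"
          using S0 by (rule mult_left_mono)
        thus ?thesis unfolding D_def by simp
      qed
      moreover have "f n \<le> 1"
      proof -
        have "(\<Sum>y\<in>boxes (m n) n \<inter> {y. ord_stat y j = omega w}. bweight w y) \<le> Zbb w (m n) n"
          unfolding Zbb_def by (rule sum_mono2[OF finite_boxes]) (auto simp: bweight_nonneg w0)
        thus ?thesis unfolding f_def bb_prob_def using Z by simp
      qed
      ultimately show "1 - D / real n \<le> f n \<and> f n \<le> 1" using b by linarith
    qed
  qed
  have l1: "((\<lambda>n. 1 - D / real n) \<longlongrightarrow> 1) F"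
  proof -
    have "(\<lambda>n. D * (1 / real n)) \<longlonglongrightarrow> D * 0" by (intro tendsto_mult tendsto_const lim_inverse_n')
    hence "(\<lambda>n. 1 - D / real n) \<longlonglongrightarrow> 1 - 0" by (intro tendsto_diff) auto
    hence "(\<lambda>n. 1 - D / real n) \<longlonglongrightarrow> 1" by simp
    thus ?thesis unfolding F_def by (rule tendsto_mono[OF inf_le1])
  qed
  have "(f \<longlongrightarrow> 1) F"
    by (rule tendsto_sandwich[OF _ _ l1 tendsto_const]) (use ev in \<open>auto elim: eventually_mono\<close>)
  thus ?thesis unfolding f_def F_def .
qed


end
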